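(* Under Assumptions (A1) and (A2), the mean field game $(F,\phi)$ admits at least one mixed stationary Nash equilibrium (MSNE).
   Context: Model: classes $c\in[C]$ with masses $m^c>0$, finite state sets $\mathcal S^c$, nonempty finite admissible action sets $\mathcal A^c(s)$ ($\mathcal A^c=\bigcup_s\mathcal A^c(s)$), transition kernels $\phi^c(\cdot\mid s,a)\in\mathcal P(\mathcal S^c)$, rates $\lambda^c>0$; $p=\sum_c|\mathcal S^c|$, $q=\sum_c|\mathcal A^c|$. Policies $u:\mathcal S^c\to\mathcal P(\mathcal A^c)$ with support in $\mathcal A^c(s)$; $\mathcal U^c_D$ = deterministic policies. $\phi^{c,u}_{ss'}=\sum_{a'\in\mathcal A^c(s')}\phi^c(s\mid s',a')u(a'\mid s')$. (A2): for all $c$ and $u\in\mathcal U^c_D$, $\phi^{c,u}$ has exactly one recurrent communicating class; $\eta^{c,u}$ is then the unique stationary distribution of the continuous-time chain with generator $\lambda^c(\phi^{c,u}-I)$. $X^c=\{\nu\in\mathbb R_{\ge0}^{\mathcal S^c\times\mathcal U^c_D}:\sum\nu=m^c\}$, $X=\prod_cX^c$; $X_{\mathcal S\times\mathcal A}=\prod_c\{\nu\in\mathbb R_{\ge0}^{\mathcal S^c\times\mathcal A^c}:\sum\nu=m^c\}$. For $\mu\in X$: $\mu^c_{\mathcal S\times\mathcal A}[s,a]=\sum_{u}\mu^c[s,u]u(a\mid s)$, $\mu^c[\mathcal S^c,u]=\sum_s\mu^c[s,u]$. Rewards $r^c:\mathcal S^c\times\mathcal A^c\times X_{\mathcal S\times\mathcal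 A}\to\mathbb R$. (A1): each $r^c(s,a,\cdot)$ extends to $\mathbb R_{\ge0}^{pq}$ and the extension is continuously differentiable in all coordinates on $X_{\mathcal S\times\mathcal A}$. $F^c_u(\mu)=\sum_{s\in\mathcal S^c}\sum_{a\in\mathcal A^c(s)}\eta^{c,u}(s)u(a\mid s)r^c(s,a,\mu_{\mathcal S\times\mathcal A})$ for $u\in\mathcal U^c_D$. MSNE: $\mu\in X$ such that for all $c$ and $u\in\mathcal U^c_D$: (i) $\mu^c[\mathcal S^c,u]>0\Rightarrow F^c_u(\mu)\ge F^c_v(\mu)$ for all $v\in\mathcal U^c_D$; (ii) $\mu^c[s,u]=\eta^{c,u}(s)\mu^c[\mathcal S^c,u]$ for all $s\in\mathcal S^c$. *)

theory Defs
  imports "HOL-Analysis.Analysis" "HOL-Library.FuncSet"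
begin

text \<open>
States of class c form the finite
set S c of a finite type 's; actions are elements of a finite type 'a and the
admissible actions at state s of class c form A c s.
phi c s a s' is the probability phi^c(s' | s, a) of moving to s' from s under a.
Deterministic policies of class c are the extensional functions in
PiE (S c) (A c); a deterministic policy u is identified with the mixed policy
u(a|s) = (if u s = a then 1 else 0).
Points of X_{S x A} are vectors indexed by (class, state, action); coordinates
outside S c x A^c are 0.
\<close>

definition Aall :: "('c \<Rightarrow> 's set) \<Rightarrow> ('c \<Rightarrow> 's \<Rightarrow> 'a set) \<Rightarrow> 'c \<Rightarrow> 'a set" where
  "Aall S A c = (\<Union>s\<in>S c. A c s)"

definition UD :: "('c \<Rightarrow> 's set) \<Rightarrow> ('c \<Rightarrow> 's \<Rightarrow> 'a set) \<Rightarrow> 'c \<Rightarrow> ('s \<Rightarrow> 'a) set" where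
  "UD S A c = PiE (S c) (A c)"

definition pol :: "('s \<Rightarrow> 'a) \<Rightarrow> 'a \<Rightarrow> 's \<Rightarrow> real" where
  "pol u a s = (if u s = a then 1 else 0)"

text \<open>phiu ... c u s s' is phi^{c,u}_{s s'} = sum_{a'} phi^c(s | s', a') u(a' | s').\<close>
definition phiu :: "('c \<Rightarrow> 's set) \<Rightarrow> ('c \<Rightarrow> 's \<Rightarrow> 'a set) \<Rightarrow> ('c \<Rightarrow> 's \<Rightarrow> 'a \<Rightarrow> 's \<Rightarrow> real)
    \<Rightarrow> 'c \<Rightarrow> ('s \<Rightarrow> 'a) \<Rightarrow> 's \<Rightarrow> 's \<Rightarrow> real" where
  "phiu S A phi c u s s' = (\<Sum>a'\<in>A c s'. phi c s' a' s * pol u a' s')"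

definition trans_graph :: "('c \<Rightarrow> 's set) \<Rightarrow> ('c \<Rightarrow> 's \<Rightarrow> 'a set) \<Rightarrow> ('c \<Rightarrow> 's \<Rightarrow> 'a \<Rightarrow> 's \<Rightarrow> real)
    \<Rightarrow> 'c \<Rightarrow> ('s \<Rightarrow> 'a) \<Rightarrow> ('s \<times> 's) set" where
  "trans_graph S A phi c u = {(s', s). s' \<in> S c \<and> s \<in> S c \<and> phiu S A phi c u s s' > 0}"

text \<open>Recurrent communicating class of a finite chain: a nonempty set of states K
such that the set of states reachable from any x in K is exactly K
(i.e. a closed communicating class).\<close>
definition recurrent_class :: "('c \<Rightarrow> 's set) \<Rightarrow> ('c \<Rightarrow> 's \<Rightarrow> 'a set) \<Rightarrow> ('c \<Rightarrow> 's \<Rightarrow> 'a \<Rightarrow> 's \<Rightarrow> real)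
    \<Rightarrow> 'c \<Rightarrow> ('s \<Rightarrow> 'a) \<Rightarrow> 's set \<Rightarrow> bool" where
  "recurrent_class S A phi c u K \<longleftrightarrow> K \<subseteq> S c \<and> K \<noteq> {} \<and>
     (\<forall>x\<in>K. {y. (x, y) \<in> (trans_graph S A phi c u)\<^sup>*} = K)"

definition assumption_A2 :: "('c \<Rightarrow> 's set) \<Rightarrow> ('c \<Rightarrow> 's \<Rightarrow> 'a set) \<Rightarrow> ('c \<Rightarrow> 's \<Rightarrow> 'a \<Rightarrow> 's \<Rightarrow> real) \<Rightarrow> bool" where
  "assumption_A2 S A phi \<longleftrightarrow> (\<forall>c. \<forall>u\<in>UD S A c. \<exists>!K. recurrent_class S A phi c u K)"

text \<open>Stationary distribution (supported on S c) of the continuous-time chain with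
generator lam c * (phi^{c,u} - I), in the column convention of phi^{c,u}.\<close>
definition stationary :: "('c \<Rightarrow> 's set) \<Rightarrow> ('c \<Rightarrow> 's \<Rightarrow> 'a set) \<Rightarrow> ('c \<Rightarrow> 's \<Rightarrow> 'a \<Rightarrow> 's \<Rightarrow> real)
    \<Rightarrow> ('c \<Rightarrow> real) \<Rightarrow> 'c \<Rightarrow> ('s \<Rightarrow> 'a) \<Rightarrow> ('s \<Rightarrow> real) \<Rightarrow> bool" where
  "stationary S A phi lam c u \<eta> \<longleftrightarrow>
     (\<forall>s. s \<notin> S c \<longrightarrow> \<eta> s = 0) \<and> (\<forall>s\<in>S c. 0 \<le> \<eta> s) \<and> sum \<eta> (S c) = 1 \<and>
     (\<forall>s\<in>S c. (\<Sum>s'\<in>S c. lam c * (phiu S A phi c u s s' - (if s = s' then 1 else 0)) * \<eta> s') = 0)"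

definition eta :: "('c \<Rightarrow> 's set) \<Rightarrow> ('c \<Rightarrow> 's \<Rightarrow> 'a set) \<Rightarrow> ('c \<Rightarrow> 's \<Rightarrow> 'a \<Rightarrow> 's \<Rightarrow> real)
    \<Rightarrow> ('c \<Rightarrow> real) \<Rightarrow> 'c \<Rightarrow> ('s \<Rightarrow> 'a) \<Rightarrow> 's \<Rightarrow> real" where
  "eta S A phi lam c u = (THE \<eta>. stationary S A phi lam c u \<eta>)"

definition XSA :: "('c \<Rightarrow> 's set) \<Rightarrow> ('c \<Rightarrow> 's \<Rightarrow> 'a set) \<Rightarrow> ('c \<Rightarrow> real)
    \<Rightarrow> (real ^ ('c::finite \<times> 's::finite \<times> 'a::finite)) set" where
  "XSA S A m = {\<nu>. (\<forall>c s a. 0 \<le> \<nu> $ (c, s, a)) \<and>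
      (\<forall>c s a. \<not> (s \<in> S c \<and> a \<in> Aall S A c) \<longrightarrow> \<nu> $ (c, s, a) = 0) \<and>
      (\<forall>c. (\<Sum>s\<in>S c. \<Sum>a\<in>Aall S A c. \<nu> $ (c, s, a)) = m c)}"

definition nonneg_orthant :: "(real ^ 'i::finite) set" where
  "nonneg_orthant = {x. \<forall>i. 0 \<le> x $ i}"

text \<open>(A1): each r^c(s,a,.) extends to the nonnegative orthant, and the extension is
continuously differentiable on X_{S x A} (derivative taken within the orthant).\<close>
definition assumption_A1 :: "('c \<Rightarrow> 's set) \<Rightarrow> ('c \<Rightarrow> 's \<Rightarrow> 'a set) \<Rightarrow> ('c \<Rightarrow> real)
    \<Rightarrow> ('c \<Rightarrow> 's \<Rightarrow> 'a \<Rightarrow> real ^ ('c::finite \<times> 's::finite \<times> 'a::finite) \<Rightarrow> real) \<Rightarrow> bool" where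
  "assumption_A1 S A m r \<longleftrightarrow>
     (\<forall>c. \<forall>s\<in>S c. \<forall>a\<in>Aall S A c.
        \<exists>g g'. (\<forall>\<nu>\<in>XSA S A m. g \<nu> = r c s a \<nu>) \<and>
               (\<forall>\<nu>\<in>XSA S A m. (g has_derivative blinfun_apply (g' \<nu>)) (at \<nu> within nonneg_orthant)) \<and>
               continuous_on (XSA S A m) g')"

definition inX :: "('c \<Rightarrow> 's set) \<Rightarrow> ('c \<Rightarrow> 's \<Rightarrow> 'a set) \<Rightarrow> ('c \<Rightarrow> real)
    \<Rightarrow> ('c \<Rightarrow> 's \<Rightarrow> ('s \<Rightarrow> 'a) \<Rightarrow> real) \<Rightarrow> bool" where
  "inX S A m \<mu> \<longleftrightarrow> (\<forall>c. (\<forall>s\<in>S c. \<forall>u\<in>UD S A c. 0 \<le> \<mu> c s u) \<and>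
      (\<Sum>s\<in>S c. \<Sum>u\<in>UD S A c. \<mu> c s u) = m c)"

definition muSA :: "('c \<Rightarrow> 's set) \<Rightarrow> ('c \<Rightarrow> 's \<Rightarrow> 'a set)
    \<Rightarrow> ('c \<Rightarrow> 's \<Rightarrow> ('s \<Rightarrow> 'a) \<Rightarrow> real) \<Rightarrow> real ^ ('c::finite \<times> 's::finite \<times> 'a::finite)" where
  "muSA S A \<mu> = (\<chi> i. (case i of (c, s, a) \<Rightarrow>
      if s \<in> S c \<and> a \<in> Aall S A c then (\<Sum>u\<in>UD S A c. \<mu> c s u * pol u a s) else 0))"

definition Fval :: "('c \<Rightarrow> 's set) \<Rightarrow> ('c \<Rightarrow> 's \<Rightarrow> 'a set) \<Rightarrow> ('c \<Rightarrow> 's \<Rightarrow> 'a \<Rightarrow> 's \<Rightarrow> real)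
    \<Rightarrow> ('c \<Rightarrow> real) \<Rightarrow> ('c \<Rightarrow> 's \<Rightarrow> 'a \<Rightarrow> real ^ ('c::finite \<times> 's::finite \<times> 'a::finite) \<Rightarrow> real)
    \<Rightarrow> 'c \<Rightarrow> ('s \<Rightarrow> 'a) \<Rightarrow> ('c \<Rightarrow> 's \<Rightarrow> ('s \<Rightarrow> 'a) \<Rightarrow> real) \<Rightarrow> real" where
  "Fval S A phi lam r c u \<mu> =
     (\<Sum>s\<in>S c. \<Sum>a\<in>A c s. eta S A phi lam c u s * pol u a s * r c s a (muSA S A \<mu>))"

definition MSNE :: "('c \<Rightarrow> 's set) \<Rightarrow> ('c \<Rightarrow> 's \<Rightarrow> 'a set) \<Rightarrow> ('c \<Rightarrow> 's \<Rightarrow> 'a \<Rightarrow> 's \<Rightarrow> real)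
    \<Rightarrow> ('c \<Rightarrow> real) \<Rightarrow> ('c \<Rightarrow> real) \<Rightarrow> ('c \<Rightarrow> 's \<Rightarrow> 'a \<Rightarrow> real ^ ('c::finite \<times> 's::finite \<times> 'a::finite) \<Rightarrow> real)
    \<Rightarrow> ('c \<Rightarrow> 's \<Rightarrow> ('s \<Rightarrow> 'a) \<Rightarrow> real) \<Rightarrow> bool" where
  "MSNE S A phi lam m r \<mu> \<longleftrightarrow> inX S A m \<mu> \<and>
     (\<forall>c. \<forall>u\<in>UD S A c.
        ((\<Sum>s\<in>S c. \<mu> c s u) > 0 \<longrightarrow> (\<forall>v\<in>UD S A c. Fval S A phi lam r c u \<mu> \<ge> Fval S A phi lam r c v \<mu>)) \<and>
        (\<forall>s\<in>S c. \<mu> c s u = eta S A phi lam c u s * (\<Sum>s'\<in>S c. \<mu> c s' u)))"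

end

theory Submission
  imports Defs
begin

lemma reach_S:
  assumes "(x,y) \<in> {(x,y). x\<in>S \<and> y\<in>S \<and> P y x > (0::real)}\<^sup>*" "x \<in> S"
  shows "y \<in> S"
  using assms by (induction rule: rtrancl_induct) auto

lemma pos_prop:
  fixes S :: "'s::finite set" and P :: "'s \<Rightarrow> 's \<Rightarrow> real"
  assumes Pnn: "\<forall>x\<in>S. \<forall>y\<in>S. 0 \<le> P y x"
    and wnn: "\<forall>s\<in>S. 0 \<le> w s"
    and wfix: "\<forall>s\<in>S. (\<Sum>s'\<in>S. P s s' * w s') = w s"
    and r: "(x,y) \<in> {(x,y). x\<in>S \<and> y\<in>S \<and> P y x > 0}\<^sup>*"
    and xS: "x \<in> S" and wx: "w x > 0"
  shows "w y > 0"
  using r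
proof (induction rule: rtrancl_induct)
  case base then show ?case using wx .
next
  case (step y z)
  then have yS: "y \<in> S" and zS: "z \<in> S" and Pzy: "P z y > 0" by auto
  have "P z y * w y \<le> (\<Sum>s'\<in>S. P z s' * w s')"
    by (rule member_le_sum) (use yS zS Pnn wnn in auto)
  moreover have "P z y * w y > 0" using Pzy step.IH by simp
  ultimately show ?case using wfix zS by auto
qed

lemma exists_stationary:
  fixes S :: "'s::finite set" and P :: "'s \<Rightarrow> 's \<Rightarrow> real"
  assumes Pnn: "\<forall>x\<in>S. \<forall>y\<in>S. 0 \<le> P y x"
    and Psum: "\<forall>x\<in>S. (\<Sum>y\<in>S. P y x) = 1"
    and ne: "S \<noteq> {}"
  shows "\<exists>\<eta>. (\<forall>s. s \<notin> S \<longrightarrow> \<eta> s = 0) \<and> (\<forall>s\<in>S. 0 \<le> \<eta> s) \<and> sum \<eta> S = 1 \<and>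
             (\<forall>s\<in>S. (\<Sum>s'\<in>S. P s s' * \<eta> s') = \<eta> s)"
proof -
  define D where "D = {x::real^'s. (\<forall>i. 0 \<le> x$i \<and> x$i \<le> 1) \<and> (\<forall>i. i \<notin> S \<longrightarrow> x$i = 0) \<and> sum (\<lambda>i. x$i) S = 1}"
  define f where "f = (\<lambda>x::real^'s. \<chi> s. if s \<in> S then (\<Sum>s'\<in>S. P s s' * x$s') else 0)"
  have eqD: "D = cbox 0 1 \<inter> (\<Inter>i\<in>-S. {x. x$i = 0}) \<inter> {x. sum (\<lambda>i. x$i) S = 1}"
    unfolding D_def by (auto simp: mem_box_cart)
  have "closed (\<Inter>i\<in>-S. {x::real^'s. x$i = 0})"
    by (intro closed_INT ballI closed_Collect_eq continuous_intros)
  moreover have "closed {x::real^'s. sum (\<lambda>i. x$i) S = 1}"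
    by (intro closed_Collect_eq continuous_intros)
  ultimately have cD: "compact D" unfolding eqD
    by (intro compact_Int_closed closed_Int compact_cbox) auto
  have vD: "convex D"
    unfolding convex_def D_def
  proof (intro ballI allI impI, safe)
    fix x y :: "real^'s" and u v :: real and i
    assume h: "\<forall>i. 0 \<le> x $ i \<and> x $ i \<le> 1" "\<forall>i. i \<notin> S \<longrightarrow> x $ i = 0" "(\<Sum>i\<in>S. x $ i) = 1"
       "\<forall>i. 0 \<le> y $ i \<and> y $ i \<le> 1" "\<forall>i. i \<notin> S \<longrightarrow> y $ i = 0" "(\<Sum>i\<in>S. y $ i) = 1"
       "0 \<le> u" "0 \<le> v" "u + v = 1"
    show "0 \<le> (u *\<^sub>R x + v *\<^sub>R y) $ i" using h by simp
    have "u * x$i + v * y$i \<le> u * 1 + v * 1"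
      using h by (intro add_mono mult_left_mono) auto
    then show "(u *\<^sub>R x + v *\<^sub>R y) $ i \<le> 1" using h by simp
    show "i \<notin> S \<Longrightarrow> (u *\<^sub>R x + v *\<^sub>R y) $ i = 0" using h by simp
    show "(\<Sum>i\<in>S. (u *\<^sub>R x + v *\<^sub>R y) $ i) = 1"
      using h by (simp add: sum.distrib sum_distrib_left[symmetric])
  qed
  obtain s0 where s0: "s0 \<in> S" using ne by auto
  have neD: "D \<noteq> {}"
  proof -
    have "axis s0 1 \<in> D" unfolding D_def using s0
      by (auto simp: axis_def if_distrib sum.delta cong: if_cong)
    then show ?thesis by auto
  qed
  have contf: "continuous_on D f" unfolding f_def
    by (rule continuous_on_vec_lambda, case_tac "s \<in> S") (auto intro!: continuous_intros)
  have fD: "f \<in> D \<rightarrow> D"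
  proof
    fix x assume xD: "x \<in> D"
    have nn: "\<forall>s\<in>S. 0 \<le> (\<Sum>s'\<in>S. P s s' * x$s')"
      using xD Pnn unfolding D_def by (auto intro!: sum_nonneg)
    have tot: "(\<Sum>s\<in>S. \<Sum>s'\<in>S. P s s' * x$s') = 1"
    proof -
      have "(\<Sum>s\<in>S. \<Sum>s'\<in>S. P s s' * x$s') = (\<Sum>s'\<in>S. (\<Sum>s\<in>S. P s s') * x$s')"
        by (subst sum.swap) (simp add: sum_distrib_right)
      also have "\<dots> = (\<Sum>s'\<in>S. x$s')" using Psum by simp
      finally show ?thesis using xD unfolding D_def by simp
    qed
    have le1: "\<forall>s\<in>S. (\<Sum>s'\<in>S. P s s' * x$s') \<le> 1"
    proof
      fix s assume "s \<in> S"
      then have "(\<Sum>s'\<in>S. P s s' * x$s') \<le> (\<Sum>s\<in>S. \<Sum>s'\<in>S. P s s' * x$s')"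
        using nn by (intro member_le_sum) auto
      then show "(\<Sum>s'\<in>S. P s s' * x$s') \<le> 1" using tot by simp
    qed
    show "f x \<in> D" unfolding D_def f_def using nn le1 tot
      by (auto simp: if_distrib cong: if_cong)
  qed
  obtain x where xD: "x \<in> D" and fx: "f x = x"
    using brouwer[OF cD vD neD contf fD] by blast
  show ?thesis
  proof (intro exI[of _ "\<lambda>s. x$s"] conjI)
    show "\<forall>s\<in>S. (\<Sum>s'\<in>S. P s s' * x$s') = x$s"
    proof
      fix s assume "s \<in> S"
      then show "(\<Sum>s'\<in>S. P s s' * x$s') = x$s"
        using arg_cong[OF fx, of "\<lambda>y. y$s"] unfolding f_def by simp
    qed
  qed (use xD in \<open>auto simp: D_def\<close>)
qed

lemma reach_rec:
  fixes S :: "'s::finite set" and G :: "('s \<times> 's) set"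
  assumes GS: "\<And>x y. (x,y) \<in> G\<^sup>* \<Longrightarrow> x \<in> S \<Longrightarrow> y \<in> S"
  assumes xS: "x \<in> S"
  shows "\<exists>K'. K' \<subseteq> S \<and> K' \<noteq> {} \<and> (\<forall>z\<in>K'. {y. (z,y) \<in> G\<^sup>*} = K') \<and> K' \<subseteq> {y. (x,y) \<in> G\<^sup>*}"
  using xS
proof (induction "card {y. (x,y) \<in> G\<^sup>*}" arbitrary: x rule: less_induct)
  case less
  define R where "R = (\<lambda>x. {y. (x,y) \<in> G\<^sup>*})"
  have RS: "R z \<subseteq> S" if "z \<in> S" for z
    unfolding R_def using GS that by blast
  have Rx: "x \<in> R x" unfolding R_def by simp
  show ?case
  proof (cases "\<forall>z\<in>R x. R z = R x")
    case True
    show ?thesis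
      apply (rule exI[of _ "R x"])
      using True RS[OF less.prems] Rx unfolding R_def by blast
  next
    case False
    then obtain z where z: "z \<in> R x" "R z \<noteq> R x" by auto
    have sub: "R z \<subseteq> R x" using z(1) unfolding R_def
      using rtrancl_trans by fastforce
    have zS: "z \<in> S" using z(1) RS[OF less.prems] by auto
    have "card (R z) < card (R x)"
      using sub z(2) by (intro psubset_card_mono) auto
    then have "card {y. (z,y) \<in> G\<^sup>*} < card {y. (x,y) \<in> G\<^sup>*}" unfolding R_def .
    from less.hyps[OF this zS] obtain K' where
      "K' \<subseteq> S" "K' \<noteq> {}" "\<forall>z\<in>K'. {y. (z,y) \<in> G\<^sup>*} = K'" "K' \<subseteq> R z"
      unfolding R_def by blast
    then show ?thesis using sub unfolding R_def by blast
  qed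
qed

lemma unique_stationary:
  fixes S :: "'s::finite set" and P :: "'s \<Rightarrow> 's \<Rightarrow> real"
  defines "G \<equiv> {(x,y). x\<in>S \<and> y\<in>S \<and> P y x > 0}"
  assumes Pnn: "\<forall>x\<in>S. \<forall>y\<in>S. 0 \<le> P y x"
    and Psum: "\<forall>x\<in>S. (\<Sum>y\<in>S. P y x) = 1"
    and uniq: "\<exists>!K. K \<subseteq> S \<and> K \<noteq> {} \<and> (\<forall>x\<in>K. {y. (x,y) \<in> G\<^sup>*} = K)"
    and h1: "(\<forall>s. s \<notin> S \<longrightarrow> e1 s = 0) \<and> (\<forall>s\<in>S. 0 \<le> e1 s) \<and> sum e1 S = 1 \<and>
             (\<forall>s\<in>S. (\<Sum>s'\<in>S. P s s' * e1 s') = e1 s)"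
    and h2: "(\<forall>s. s \<notin> S \<longrightarrow> e2 s = 0) \<and> (\<forall>s\<in>S. 0 \<le> e2 s) \<and> sum e2 S = 1 \<and>
             (\<forall>s\<in>S. (\<Sum>s'\<in>S. P s s' * e2 s') = e2 s)"
  shows "e1 = e2"
proof -
  obtain K where K0: "K \<subseteq> S \<and> K \<noteq> {} \<and> (\<forall>x\<in>K. {y. (x,y) \<in> G\<^sup>*} = K)"
    and Kall: "\<forall>K'. K' \<subseteq> S \<and> K' \<noteq> {} \<and> (\<forall>x\<in>K'. {y. (x,y) \<in> G\<^sup>*} = K') \<longrightarrow> K' = K"
    by (rule ex1E[OF uniq])
  have K: "K \<subseteq> S" "K \<noteq> {}" "\<forall>x\<in>K. {y. (x,y) \<in> G\<^sup>*} = K" using K0 by auto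
  have GS: "\<And>x y. (x,y) \<in> G\<^sup>* \<Longrightarrow> x \<in> S \<Longrightarrow> y \<in> S"
    unfolding G_def by (rule reach_S)
  have Kuniq: "K' = K" if "K' \<subseteq> S" "K' \<noteq> {}" "\<forall>x\<in>K'. {y. (x,y) \<in> G\<^sup>*} = K'" for K'
    by (rule Kall[rule_format]) (use that in simp)
  have reachK: "\<exists>z\<in>K. (x,z) \<in> G\<^sup>*" if xS: "x \<in> S" for x
  proof -
    have ex: "\<exists>K'. K' \<subseteq> S \<and> K' \<noteq> {} \<and> (\<forall>z\<in>K'. {y. (z,y) \<in> G\<^sup>*} = K') \<and> K' \<subseteq> {y. (x,y) \<in> G\<^sup>*}"
      by (rule reach_rec[OF GS xS])
    then obtain K' where K'p: "K' \<subseteq> S \<and> K' \<noteq> {} \<and> (\<forall>z\<in>K'. {y. (z,y) \<in> G\<^sup>*} = K') \<and> K' \<subseteq> {y. (x,y) \<in> G\<^sup>*}"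
      by (rule exE)
    have "K' = K" by (rule Kuniq) (use K'p in simp_all)
    then have "K \<noteq> {}" "K \<subseteq> {y. (x,y) \<in> G\<^sup>*}" using K'p by simp_all
    then obtain z where "z \<in> K" "(x,z) \<in> G\<^sup>*" by auto
    then show ?thesis by (rule bexI[rotated])
  qed
  have Kclosed: "y \<in> K" if "x \<in> K" "y \<in> S" "P y x > 0" for x y
  proof -
    have "(x,y) \<in> G\<^sup>*" using that K(1) unfolding G_def by auto
    then have "y \<in> {y. (x,y) \<in> G\<^sup>*}" by simp
    then show ?thesis using K(3) that(1) by simp
  qed
  have supp: "\<forall>x\<in>S - K. e x = 0"
    if he: "(\<forall>s. s \<notin> S \<longrightarrow> e s = 0) \<and> (\<forall>s\<in>S. 0 \<le> e s) \<and> sum e S = 1 \<and>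
             (\<forall>s\<in>S. (\<Sum>s'\<in>S. P s s' * e s') = e s)" for e
  proof -
    have fin: "finite S" by simp
    have colK: "(\<Sum>y\<in>K. P y x) = 1" if "x \<in> K" for x
    proof -
      have "(\<Sum>y\<in>S. P y x) = (\<Sum>y\<in>S-K. P y x) + (\<Sum>y\<in>K. P y x)"
        by (rule sum.subset_diff[OF K(1) fin])
      moreover have "\<forall>y\<in>S-K. P y x = 0"
      proof
        fix y assume y: "y \<in> S - K"
        have "P y x \<ge> 0" using Pnn that K(1) y by auto
        moreover have "\<not> P y x > 0" using Kclosed[OF that] y by auto
        ultimately show "P y x = 0" by simp
      qed
      ultimately show ?thesis using Psum that K(1) by auto
    qed
    have "(\<Sum>y\<in>K. e y) = (\<Sum>y\<in>K. \<Sum>x\<in>S. P y x * e x)"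
      using he K(1) by (intro sum.cong) auto
    also have "\<dots> = (\<Sum>x\<in>S. e x * (\<Sum>y\<in>K. P y x))"
      by (subst sum.swap) (simp add: sum_distrib_left mult.commute)
    also have "\<dots> = (\<Sum>x\<in>K. e x * (\<Sum>y\<in>K. P y x)) + (\<Sum>x\<in>S-K. e x * (\<Sum>y\<in>K. P y x))"
      using sum.subset_diff[OF K(1) fin, of "\<lambda>x. e x * (\<Sum>y\<in>K. P y x)"] by simp
    also have "(\<Sum>x\<in>K. e x * (\<Sum>y\<in>K. P y x)) = (\<Sum>y\<in>K. e y)"
      using colK by simp
    finally have z: "(\<Sum>x\<in>S-K. e x * (\<Sum>y\<in>K. P y x)) = 0" by simp
    have nnt: "\<forall>x\<in>S-K. 0 \<le> e x * (\<Sum>y\<in>K. P y x)"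
      using he Pnn K(1) by (auto intro!: mult_nonneg_nonneg sum_nonneg)
    have z2: "\<forall>x\<in>S-K. e x * (\<Sum>y\<in>K. P y x) = 0"
    proof -
      have "((\<Sum>x\<in>S-K. e x * (\<Sum>y\<in>K. P y x)) = 0) = (\<forall>x\<in>S-K. e x * (\<Sum>y\<in>K. P y x) = 0)"
        by (rule sum_nonneg_eq_0_iff) (simp, use nnt in blast)
      then show ?thesis using z by blast
    qed
    have main: "x \<in> S \<longrightarrow> e x > 0 \<longrightarrow> x \<in> K" if "(x,z) \<in> G\<^sup>*" "z \<in> K" for x z
      using that(1)
    proof (induction rule: converse_rtrancl_induct)
      case base then show ?case using that(2) by simp
    next
      case (step x y)
      show ?case
      proof (intro impI)
        assume xS: "x \<in> S" and ex: "e x > 0"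
        have yS: "y \<in> S" and Pyx: "P y x > 0" using step.hyps(1) unfolding G_def by auto
        have "P y x * e x \<le> (\<Sum>s'\<in>S. P y s' * e s')"
          by (rule member_le_sum) (use xS yS Pnn he in auto)
        moreover have "0 < P y x * e x" using Pyx ex by simp
        moreover have "(\<Sum>s'\<in>S. P y s' * e s') = e y" using he yS by blast
        ultimately have "e y > 0" by linarith
        then have yK: "y \<in> K" using step.IH yS by simp
        show "x \<in> K"
        proof (rule ccontr)
          assume "x \<notin> K"
          have "P y x \<le> (\<Sum>y\<in>K. P y x)"
            by (rule member_le_sum) (use yK K(1) Pnn xS in auto)
          then have "e x * (\<Sum>y\<in>K. P y x) > 0" using Pyx ex by simp
          then show False using z2 xS \<open>x \<notin> K\<close> by auto
        qed
      qed
    qed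
    show ?thesis
    proof
      fix x assume x: "x \<in> S - K"
      obtain z where "z \<in> K" "(x,z) \<in> G\<^sup>*" using reachK x by auto
      then have "e x > 0 \<longrightarrow> x \<in> K" using main x by auto
      moreover have "0 \<le> e x" using he x by auto
      ultimately show "e x = 0" using x by auto
    qed
  qed
  have posK: "\<forall>y\<in>K. e y > 0"
    if he: "(\<forall>s. s \<notin> S \<longrightarrow> e s = 0) \<and> (\<forall>s\<in>S. 0 \<le> e s) \<and> sum e S = 1 \<and>
             (\<forall>s\<in>S. (\<Sum>s'\<in>S. P s s' * e s') = e s)" for e
  proof
    fix y assume yK: "y \<in> K"
    have "\<exists>x\<in>S. e x \<noteq> 0"
    proof (rule ccontr)
      assume "\<not> (\<exists>x\<in>S. e x \<noteq> 0)"
      then have "sum e S = 0" by simp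
      then show False using he by simp
    qed
    then obtain x where xS: "x \<in> S" and ex: "e x \<noteq> 0" by blast
    have xK: "x \<in> K" using supp[OF he] xS ex by auto
    have "0 \<le> e x" using he xS by blast
    then have exp: "e x > 0" using ex by simp
    have "y \<in> {y. (x,y) \<in> G\<^sup>*}" using bspec[OF K(3) xK] yK by simp
    then have r: "(x,y) \<in> {(x,y). x\<in>S \<and> y\<in>S \<and> P y x > 0}\<^sup>*" unfolding G_def by simp
    have n1: "\<forall>s\<in>S. 0 \<le> e s" and n2: "\<forall>s\<in>S. (\<Sum>s'\<in>S. P s s' * e s') = e s" using he by simp_all
    show "e y > 0" by (rule pos_prop[OF Pnn n1 n2 r xS exp])
  qed
  have finK: "finite K" by simp
  define t where "t = Min ((\<lambda>y. e1 y / e2 y) ` K)"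
  have "t \<in> (\<lambda>y. e1 y / e2 y) ` K" unfolding t_def
    by (rule Min_in) (use finK K(2) in auto)
  then obtain y0 where y0: "y0 \<in> K" "t = e1 y0 / e2 y0" by auto
  have tle: "t \<le> e1 y / e2 y" if "y \<in> K" for y
    unfolding t_def using that finK by (intro Min_le) auto
  define w where "w = (\<lambda>s. e1 s - t * e2 s)"
  have p1: "\<forall>y\<in>K. e1 y > 0" and p2: "\<forall>y\<in>K. e2 y > 0" using posK h1 h2 by auto
  have s1: "\<forall>x\<in>S - K. e1 x = 0" and s2: "\<forall>x\<in>S - K. e2 x = 0" using supp h1 h2 by auto
  have wnn: "\<forall>s\<in>S. 0 \<le> w s"
  proof
    fix s assume sS: "s \<in> S"
    show "0 \<le> w s"
    proof (cases "s \<in> K")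
      case True
      then have "t * e2 s \<le> e1 s / e2 s * e2 s" using tle p2 by (intro mult_right_mono) auto
      moreover have "e2 s \<noteq> 0" using p2 True by force
      ultimately show ?thesis unfolding w_def by simp
    next
      case False then show ?thesis using s1 s2 sS unfolding w_def by simp
    qed
  qed
  have wfix: "\<forall>s\<in>S. (\<Sum>s'\<in>S. P s s' * w s') = w s"
  proof
    fix s assume sS: "s \<in> S"
    have "(\<Sum>s'\<in>S. P s s' * w s') = (\<Sum>s'\<in>S. P s s' * e1 s') - t * (\<Sum>s'\<in>S. P s s' * e2 s')"
      unfolding w_def by (simp add: right_diff_distrib sum_subtractf sum_distrib_left mult.left_commute)
    also have "\<dots> = w s" using h1 h2 sS unfolding w_def by simp
    finally show "(\<Sum>s'\<in>S. P s s' * w s') = w s" .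
  qed
  have "e2 y0 > 0" using y0(1) p2 by blast
  then have wy0: "w y0 = 0" unfolding w_def using y0 by simp
  have w0: "\<forall>s\<in>S. w s = 0"
  proof (rule ccontr)
    assume "\<not> (\<forall>s\<in>S. w s = 0)"
    then obtain x where xS: "x \<in> S" and wx: "w x \<noteq> 0" by auto
    have "0 \<le> w x" using wnn xS by blast
    then have wxp: "w x > 0" using wx by simp
    have xK: "x \<in> K"
    proof (rule ccontr)
      assume "x \<notin> K"
      then have "e1 x = 0" "e2 x = 0" using s1 s2 xS by auto
      then show False using wx unfolding w_def by simp
    qed
    have "y0 \<in> {y. (x,y) \<in> G\<^sup>*}" using bspec[OF K(3) xK] y0(1) by simp
    then have "(x,y0) \<in> {(x,y). x\<in>S \<and> y\<in>S \<and> P y x > 0}\<^sup>*" unfolding G_def by simp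
    from pos_prop[OF Pnn wnn wfix this xS wxp] have "w y0 > 0" .
    then show False using wy0 by simp
  qed
  have "sum e1 S = t * sum e2 S"
    using w0 unfolding w_def by (simp add: sum_distrib_left)
  then have t1: "t = 1" using h1 h2 by simp
  show ?thesis
  proof
    fix s show "e1 s = e2 s"
      using w0 t1 h1 h2 unfolding w_def by (cases "s \<in> S") auto
  qed
qed


lemma nash_exists:
  fixes T :: "'c::finite \<Rightarrow> 'u::finite set" and M :: "'c \<Rightarrow> real"
    and F :: "'c \<Rightarrow> 'u \<Rightarrow> real^('c \<times> 'u) \<Rightarrow> real"
  defines "D \<equiv> {x::real^('c \<times> 'u). (\<forall>c u. 0 \<le> x$(c,u) \<and> x$(c,u) \<le> M c) \<and>
      (\<forall>c u. u \<notin> T c \<longrightarrow> x$(c,u) = 0) \<and> (\<forall>c. (\<Sum>u\<in>T c. x$(c,u)) = M c)}"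
  assumes Tne: "\<forall>c. T c \<noteq> {}" and Mpos: "\<forall>c. 0 < M c"
    and contF: "\<forall>c. \<forall>u\<in>T c. continuous_on D (F c u)"
  shows "\<exists>x\<in>D. \<forall>c. \<forall>u\<in>T c. 0 < x$(c,u) \<longrightarrow> (\<forall>v\<in>T c. F c v x \<le> F c u x)"
proof -
  define b :: "real^('c \<times> 'u)" where "b = (\<chi> i. M (fst i))"
  have eqD: "D = cbox 0 b \<inter> (\<Inter>i\<in>{i. snd i \<notin> T (fst i)}. {x. x$i = 0}) \<inter>
                 (\<Inter>c. {x. (\<Sum>u\<in>T c. x$(c,u)) = M c})"
    unfolding D_def b_def by (auto simp: mem_box_cart)
  have "closed (\<Inter>i\<in>{i. snd i \<notin> T (fst i)}. {x::real^('c \<times> 'u). x$i = 0})"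
    by (intro closed_INT ballI closed_Collect_eq continuous_intros)
  moreover have "closed (\<Inter>c. {x::real^('c \<times> 'u). (\<Sum>u\<in>T c. x$(c,u)) = M c})"
    by (intro closed_INT ballI closed_Collect_eq continuous_intros)
  ultimately have cD: "compact D" unfolding eqD
    by (intro compact_Int_closed closed_Int compact_cbox) auto
  have vD: "convex D"
    unfolding convex_def D_def
  proof (intro ballI allI impI, safe)
    fix x y :: "real^('c \<times> 'u)" and p q :: real and c u
    assume h: "\<forall>c u. 0 \<le> x $ (c, u) \<and> x $ (c, u) \<le> M c" "\<forall>c u. u \<notin> T c \<longrightarrow> x $ (c, u) = 0"
       "\<forall>c. (\<Sum>u\<in>T c. x $ (c, u)) = M c"
       "\<forall>c u. 0 \<le> y $ (c, u) \<and> y $ (c, u) \<le> M c" "\<forall>c u. u \<notin> T c \<longrightarrow> y $ (c, u) = 0"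
       "\<forall>c. (\<Sum>u\<in>T c. y $ (c, u)) = M c"
       "0 \<le> p" "0 \<le> q" "p + q = 1"
    show "0 \<le> (p *\<^sub>R x + q *\<^sub>R y) $ (c,u)" using h by simp
    have "p * x$(c,u) + q * y$(c,u) \<le> p * M c + q * M c"
      using h by (intro add_mono mult_left_mono) auto
    also have "\<dots> = M c" using h(9) by (simp add: distrib_right[symmetric])
    finally show "(p *\<^sub>R x + q *\<^sub>R y) $ (c,u) \<le> M c" by simp
    show "u \<notin> T c \<Longrightarrow> (p *\<^sub>R x + q *\<^sub>R y) $ (c,u) = 0" using h by simp
    have "(\<Sum>u\<in>T c. (p *\<^sub>R x + q *\<^sub>R y) $ (c,u)) = p * M c + q * M c"
      using h by (simp add: sum.distrib sum_distrib_left[symmetric])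
    also have "\<dots> = M c" using h(9) by (simp add: distrib_right[symmetric])
    finally show "(\<Sum>u\<in>T c. (p *\<^sub>R x + q *\<^sub>R y) $ (c,u)) = M c" .
  qed
  define x0 :: "real^('c \<times> 'u)" where
    "x0 = (\<chi> i. if snd i \<in> T (fst i) then M (fst i) / card (T (fst i)) else 0)"
  have neD: "D \<noteq> {}"
  proof -
    have "x0 \<in> D" unfolding D_def
    proof (intro CollectI conjI allI impI)
      fix c u
      have cp: "card (T c) \<ge> 1" using Tne by (simp add: Suc_le_eq card_gt_0_iff)
      have "M c / card (T c) \<le> M c"
        using cp Mpos by (simp add: divide_le_eq)
      moreover have "0 \<le> M c / card (T c)" using Mpos by (simp add: less_imp_le)
      ultimately show "0 \<le> x0 $ (c, u)" "x0 $ (c, u) \<le> M c" unfolding x0_def using Mpos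
        by (auto intro: less_imp_le)
      show "u \<notin> T c \<Longrightarrow> x0 $ (c, u) = 0" unfolding x0_def by simp
    next
      fix c
      have cp: "card (T c) \<noteq> 0" using Tne by (simp add: card_gt_0_iff)
      show "(\<Sum>u\<in>T c. x0 $ (c, u)) = M c" unfolding x0_def using cp by simp
    qed
    then show ?thesis by auto
  qed
  define avg where "avg = (\<lambda>c x. (\<Sum>u\<in>T c. x$(c,u) * F c u x) / M c)"
  define g where "g = (\<lambda>c u x. max 0 (F c u x - avg c x))"
  define h where "h = (\<lambda>c u x. if u \<in> T c then (x$(c,u) + M c * g c u x) / (1 + (\<Sum>v\<in>T c. g c v x)) else 0)"
  define f where "f = (\<lambda>x::real^('c \<times> 'u). \<chi> i. h (fst i) (snd i) x)"
  have gnn: "0 \<le> g c u x" for c u x unfolding g_def by simp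
  have den: "1 \<le> 1 + (\<Sum>v\<in>T c. g c v x)" for c x using gnn by (simp add: sum_nonneg)
  have cavg: "continuous_on D (avg c)" for c
  proof -
    have "M c \<noteq> 0" using Mpos by (metis less_irrefl)
    then show ?thesis unfolding avg_def using contF by (intro continuous_intros) auto
  qed
  have cg: "continuous_on D (g c u)" if "u \<in> T c" for c u
    unfolding g_def using contF that cavg by (intro continuous_intros) auto
  have ch: "continuous_on D (h c u)" for c u
  proof (cases "u \<in> T c")
    case True
    have "continuous_on D (\<lambda>x. (x$(c,u) + M c * g c u x) / (1 + (\<Sum>v\<in>T c. g c v x)))"
    proof -
      have dnz: "\<forall>x\<in>D. 1 + (\<Sum>v\<in>T c. g c v x) \<noteq> 0"
      proof
        fix x show "1 + (\<Sum>v\<in>T c. g c v x) \<noteq> 0" using den[of c x] by linarith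
      qed
      show ?thesis by (intro continuous_intros) (simp_all add: cg True dnz)
    qed
    then show ?thesis unfolding h_def using True by simp
  next
    case False then show ?thesis unfolding h_def by simp
  qed
  have contf: "continuous_on D f" unfolding f_def
    by (rule continuous_on_vec_lambda) (rule ch)
  have fD: "f \<in> D \<rightarrow> D"
  proof
    fix x assume xD: "x \<in> D"
    have fx: "f x $ (c,u) = h c u x" for c u unfolding f_def by simp
    have hnn: "0 \<le> h c u x" for c u
    proof -
      have "0 \<le> x$(c,u)" using xD unfolding D_def by blast
      moreover have "0 \<le> M c" using Mpos by (simp add: less_imp_le)
      moreover have "0 < 1 + (\<Sum>v\<in>T c. g c v x)" using den[of c x] by linarith
      ultimately show ?thesis unfolding h_def using gnn[of c u x]
        by (auto intro!: divide_nonneg_pos add_nonneg_nonneg mult_nonneg_nonneg)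
    qed
    have hsum: "(\<Sum>u\<in>T c. h c u x) = M c" for c
    proof -
      have "(\<Sum>u\<in>T c. h c u x) = (\<Sum>u\<in>T c. (x$(c,u) + M c * g c u x) / (1 + (\<Sum>v\<in>T c. g c v x)))"
        unfolding h_def by simp
      also have "\<dots> = (\<Sum>u\<in>T c. x$(c,u) + M c * g c u x) / (1 + (\<Sum>v\<in>T c. g c v x))"
        by (simp add: sum_divide_distrib)
      also have "(\<Sum>u\<in>T c. x$(c,u) + M c * g c u x) = M c * (1 + (\<Sum>v\<in>T c. g c v x))"
        using xD unfolding D_def by (simp add: sum.distrib sum_distrib_left distrib_left)
      finally show ?thesis using den[of c x] by simp
    qed
    show "f x \<in> D" unfolding D_def
    proof (intro CollectI conjI allI impI)
      fix c u
      have "h c u x \<le> M c"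
      proof (cases "u \<in> T c")
        case True
        have "h c u x \<le> (\<Sum>u\<in>T c. h c u x)" by (rule member_le_sum) (use True hnn in auto)
        then show ?thesis using hsum by simp
      next
        case False then show ?thesis using Mpos unfolding h_def by (simp add: less_imp_le)
      qed
      then show "0 \<le> f x $ (c, u)" "f x $ (c, u) \<le> M c" using hnn fx by simp_all
      show "u \<notin> T c \<Longrightarrow> f x $ (c, u) = 0" unfolding fx h_def by simp
    next
      fix c show "(\<Sum>u\<in>T c. f x $ (c, u)) = M c" unfolding fx by (rule hsum)
    qed
  qed
  obtain x where xD: "x \<in> D" and fxx: "f x = x"
    using brouwer[OF cD vD neD contf fD] by blast
  show ?thesis
  proof (intro bexI[OF _ xD] allI ballI impI)
    fix c u v assume uT: "u \<in> T c" and xpos: "0 < x$(c,u)" and vT: "v \<in> T c"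
    have xnn: "\<forall>w. 0 \<le> x$(c,w)" and xsum: "(\<Sum>w\<in>T c. x$(c,w)) = M c"
      using xD unfolding D_def by auto
    let ?G = "\<Sum>w\<in>T c. g c w x"
    have fixeq: "x$(c,w) * ?G = M c * g c w x" if "w \<in> T c" for w
    proof -
      have "x$(c,w) = (x$(c,w) + M c * g c w x) / (1 + ?G)"
        using arg_cong[OF fxx, of "\<lambda>y. y$(c,w)"] that unfolding f_def h_def by simp
      then have "x$(c,w) * (1 + ?G) = x$(c,w) + M c * g c w x"
        using den[of c x] by (simp add: field_simps)
      then show ?thesis by (simp add: algebra_simps)
    qed
    have Mc: "M c > 0" using Mpos by simp
    have avgeq: "(\<Sum>w\<in>T c. x$(c,w) * F c w x) = M c * avg c x"
      unfolding avg_def using Mc by simp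
    have diff0: "(\<Sum>w\<in>T c. x$(c,w) * (F c w x - avg c x)) = 0"
      using avgeq xsum by (simp add: right_diff_distrib sum_subtractf sum_distrib_right[symmetric])
    have "\<exists>w\<in>T c. 0 < x$(c,w) \<and> F c w x \<le> avg c x"
    proof (rule ccontr)
      assume na: "\<not> ?thesis"
      have "0 < (\<Sum>w\<in>T c. x$(c,w) * (F c w x - avg c x))"
      proof (rule sum_pos2[OF _ uT])
        show "0 < x$(c,u) * (F c u x - avg c x)" using na uT xpos by force
        show "\<And>w. w \<in> T c \<Longrightarrow> 0 \<le> x$(c,w) * (F c w x - avg c x)"
        proof -
          fix w assume wT: "w \<in> T c"
          show "0 \<le> x$(c,w) * (F c w x - avg c x)"
          proof (cases "0 < x$(c,w)")
            case True then show ?thesis using na wT by force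
          next
            case False then have "x$(c,w) = 0" using xnn by (metis order_le_less)
            then show ?thesis by simp
          qed
        qed
      qed simp
      then show False using diff0 by simp
    qed
    then obtain w0 where w0: "w0 \<in> T c" "0 < x$(c,w0)" "F c w0 x \<le> avg c x" by blast
    have "g c w0 x = 0" unfolding g_def using w0 by simp
    then have "x$(c,w0) * ?G = 0" using fixeq[OF w0(1)] by simp
    then have G0: "?G = 0" using w0(2) by simp
    have gz: "\<forall>w\<in>T c. g c w x = 0"
      using G0 gnn sum_nonneg_eq_0_iff[of "T c" "\<lambda>w. g c w x"] by simp
    have Fle: "F c w x \<le> avg c x" if "w \<in> T c" for w
      using gz that unfolding g_def by (metis max.absorb_iff2 diff_le_0_iff_le max.commute)
    have nnt: "\<forall>w\<in>T c. 0 \<le> x$(c,w) * (avg c x - F c w x)"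
      using Fle xnn by (simp add: mult_nonneg_nonneg)
    have "(\<Sum>w\<in>T c. x$(c,w) * (avg c x - F c w x)) = 0"
    proof -
      have "(\<Sum>w\<in>T c. x$(c,w) * (avg c x - F c w x)) = - (\<Sum>w\<in>T c. x$(c,w) * (F c w x - avg c x))"
        by (simp add: sum_negf[symmetric] algebra_simps)
      then show ?thesis using diff0 by simp
    qed
    then have "\<forall>w\<in>T c. x$(c,w) * (avg c x - F c w x) = 0"
      using nnt sum_nonneg_eq_0_iff[of "T c" "\<lambda>w. x$(c,w) * (avg c x - F c w x)"] by simp
    then have "x$(c,u) * (avg c x - F c u x) = 0" using uT by blast
    then have "F c u x = avg c x" using xpos by simp
    then show "F c v x \<le> F c u x" using Fle[OF vT] by simp
  qed
qed

lemma cont_if_const: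
  assumes "P \<Longrightarrow> continuous_on D f" "\<not> P \<Longrightarrow> continuous_on D g"
  shows "continuous_on D (\<lambda>x. if P then f x else g x)"
  using assms by (cases P) auto

lemma eta_props:
  fixes S :: "'c::finite \<Rightarrow> 's::finite set"
    and A :: "'c \<Rightarrow> 's \<Rightarrow> 'a::finite set"
    and phi :: "'c \<Rightarrow> 's \<Rightarrow> 'a \<Rightarrow> 's \<Rightarrow> real"
    and lam :: "'c \<Rightarrow> real"
  assumes rate_pos: "\<forall>c. 0 < lam c"
    and actions: "\<forall>c. \<forall>s\<in>S c. A c s \<noteq> {} \<and> finite (A c s)"
    and kernel: "\<forall>c. \<forall>s\<in>S c. \<forall>a\<in>A c s.
                   (\<forall>s'\<in>S c. 0 \<le> phi c s a s') \<and> (\<Sum>s'\<in>S c. phi c s a s') = 1"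
    and A2: "assumption_A2 S A phi"
    and uU: "u \<in> UD S A c"
  shows "(\<forall>s. s \<notin> S c \<longrightarrow> eta S A phi lam c u s = 0) \<and> (\<forall>s\<in>S c. 0 \<le> eta S A phi lam c u s) \<and>
         sum (eta S A phi lam c u) (S c) = 1"
proof -
  define P where "P = (\<lambda>y x. phiu S A phi c u y x)"
  have us: "u x \<in> A c x" if "x \<in> S c" for x using uU that unfolding UD_def by auto
  have Pnn: "\<forall>x\<in>S c. \<forall>y\<in>S c. 0 \<le> P y x"
    unfolding P_def phiu_def pol_def using kernel by (auto intro!: sum_nonneg)
  have Psum: "\<forall>x\<in>S c. (\<Sum>y\<in>S c. P y x) = 1"
  proof
    fix x assume xS: "x \<in> S c"
    have fin: "finite (A c x)" using actions xS by blast
    have "(\<Sum>y\<in>S c. P y x) = (\<Sum>y\<in>S c. phi c x (u x) y)"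
      unfolding P_def phiu_def pol_def using fin us[OF xS]
      by (simp add: if_distrib[of "\<lambda>z. _ * z"] sum.delta' cong: if_cong)
    also have "\<dots> = 1" using kernel xS us[OF xS] by blast
    finally show "(\<Sum>y\<in>S c. P y x) = 1" .
  qed
  have uniq0: "\<exists>!K. recurrent_class S A phi c u K" using A2 uU unfolding assumption_A2_def by blast
  have tg: "trans_graph S A phi c u = {(x,y). x\<in>S c \<and> y\<in>S c \<and> P y x > 0}"
    unfolding trans_graph_def P_def by simp
  have uniq: "\<exists>!K. K \<subseteq> S c \<and> K \<noteq> {} \<and> (\<forall>x\<in>K. {y. (x,y) \<in> {(x,y). x\<in>S c \<and> y\<in>S c \<and> P y x > 0}\<^sup>*} = K)"
    using uniq0 unfolding recurrent_class_def tg .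
  have ne: "S c \<noteq> {}"
  proof
    assume "S c = {}"
    then show False using uniq by auto
  qed
  have stat_iff: "stationary S A phi lam c u \<eta> \<longleftrightarrow>
     ((\<forall>s. s \<notin> S c \<longrightarrow> \<eta> s = 0) \<and> (\<forall>s\<in>S c. 0 \<le> \<eta> s) \<and> sum \<eta> (S c) = 1 \<and>
             (\<forall>s\<in>S c. (\<Sum>s'\<in>S c. P s s' * \<eta> s') = \<eta> s))" for \<eta>
  proof -
    have eq: "(\<Sum>s'\<in>S c. lam c * (phiu S A phi c u s s' - (if s = s' then 1 else 0)) * \<eta> s') =
              lam c * ((\<Sum>s'\<in>S c. P s s' * \<eta> s') - \<eta> s)" if "s \<in> S c" for s
    proof -
      have d: "(\<Sum>s'\<in>S c. \<eta> s' * (lam c * (if s = s' then 1 else 0))) = \<eta> s * lam c"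
      proof -
        have "(\<Sum>s'\<in>S c. \<eta> s' * (lam c * (if s = s' then 1 else 0))) = (\<Sum>s'\<in>S c. if s = s' then \<eta> s' * lam c else 0)"
          by (intro sum.cong) auto
        also have "\<dots> = \<eta> s * lam c" using that by simp
        finally show ?thesis .
      qed
      show ?thesis
      unfolding P_def using that d
      by (simp add: algebra_simps sum_subtractf sum_distrib_left if_distrib[of "\<lambda>z. z * _"] sum.delta cong: if_cong)
    qed
    have lp: "lam c \<noteq> 0" using rate_pos by (metis less_irrefl)
    show ?thesis unfolding stationary_def using eq lp by auto
  qed
  have ex1: "\<exists>!\<eta>. stationary S A phi lam c u \<eta>"
  proof (rule ex_ex1I)
    show "\<exists>\<eta>. stationary S A phi lam c u \<eta>"
      unfolding stat_iff by (rule exists_stationary[OF Pnn Psum ne])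
  next
    fix e1 e2 assume "stationary S A phi lam c u e1" "stationary S A phi lam c u e2"
    then show "e1 = e2" unfolding stat_iff by (intro unique_stationary[OF Pnn Psum uniq]) auto
  qed
  have "stationary S A phi lam c u (eta S A phi lam c u)"
    unfolding eta_def by (rule theI'[OF ex1])
  then show ?thesis unfolding stat_iff by blast
qed

lemma r_cont:
  assumes A1: "assumption_A1 S A m r" and sS: "s \<in> S c" and aA: "a \<in> Aall S A c"
  shows "continuous_on (XSA S A m) (r c s a)"
proof -
  obtain g g' where geq: "\<forall>\<nu>\<in>XSA S A m. g \<nu> = r c s a \<nu>"
    and gd: "\<forall>\<nu>\<in>XSA S A m. (g has_derivative blinfun_apply (g' \<nu>)) (at \<nu> within nonneg_orthant)"
    using A1 sS aA unfolding assumption_A1_def by blast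
  have sub: "XSA S A m \<subseteq> nonneg_orthant" unfolding XSA_def nonneg_orthant_def by auto
  have "continuous_on (XSA S A m) g"
    unfolding continuous_on_eq_continuous_within
  proof
    fix \<nu> assume \<nu>: "\<nu> \<in> XSA S A m"
    have "continuous (at \<nu> within nonneg_orthant) g"
      using has_derivative_continuous gd \<nu> by blast
    then show "continuous (at \<nu> within XSA S A m) g"
      using continuous_within_subset sub by blast
  qed
  then show ?thesis using continuous_on_cong[OF refl, of "XSA S A m" g "r c s a"] geq by blast
qed

theorem theorem1:
  fixes S :: "'c::finite \<Rightarrow> 's::finite set"
    and A :: "'c \<Rightarrow> 's \<Rightarrow> 'a::finite set"
    and phi :: "'c \<Rightarrow> 's \<Rightarrow> 'a \<Rightarrow> 's \<Rightarrow> real"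
    and lam :: "'c \<Rightarrow> real"
    and m :: "'c \<Rightarrow> real"
    and r :: "'c \<Rightarrow> 's \<Rightarrow> 'a \<Rightarrow> real ^ ('c \<times> 's \<times> 'a) \<Rightarrow> real"
  assumes mass_pos: "\<forall>c. 0 < m c"
    and rate_pos: "\<forall>c. 0 < lam c"
    and actions: "\<forall>c. \<forall>s\<in>S c. A c s \<noteq> {} \<and> finite (A c s)"
    and kernel: "\<forall>c. \<forall>s\<in>S c. \<forall>a\<in>A c s.
                   (\<forall>s'\<in>S c. 0 \<le> phi c s a s') \<and> (\<Sum>s'\<in>S c. phi c s a s') = 1"
    and A1: "assumption_A1 S A m r"
    and A2: "assumption_A2 S A phi"
  shows "\<exists>\<mu>. MSNE S A phi lam m r \<mu>"
proof -
  let ?T = "\<lambda>c. UD S A c"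
  let ?e = "eta S A phi lam"
  define mu where "mu = (\<lambda>(x::real^('c \<times> ('s \<Rightarrow> 'a))) c s u. ?e c u s * x$(c,u))"
  define D where "D = {x::real^('c \<times> ('s \<Rightarrow> 'a)). (\<forall>c u. 0 \<le> x$(c,u) \<and> x$(c,u) \<le> m c) \<and>
      (\<forall>c u. u \<notin> ?T c \<longrightarrow> x$(c,u) = 0) \<and> (\<forall>c. (\<Sum>u\<in>?T c. x$(c,u)) = m c)}"
  have ep: "(\<forall>s. s \<notin> S c \<longrightarrow> ?e c u s = 0) \<and> (\<forall>s\<in>S c. 0 \<le> ?e c u s) \<and> sum (?e c u) (S c) = 1"
    if "u \<in> ?T c" for c u
    by (rule eta_props[OF rate_pos actions kernel A2 that])
  have Tne: "\<forall>c. ?T c \<noteq> {}"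
    using actions unfolding UD_def by (auto simp: PiE_eq_empty_iff)
  have us: "u s \<in> A c s" if "u \<in> ?T c" "s \<in> S c" for u c s
    using that unfolding UD_def by auto
  have usA: "u s \<in> Aall S A c" if "u \<in> ?T c" "s \<in> S c" for u c s
    using us[OF that] that(2) unfolding Aall_def by auto
  have polsum: "(\<Sum>a\<in>Aall S A c. pol u a s) = 1" if "u \<in> ?T c" "s \<in> S c" for u c s
    unfolding pol_def using usA[OF that] by simp
  have mass: "(\<Sum>s\<in>S c. \<Sum>u\<in>?T c. mu x c s u) = m c" if "x \<in> D" for x c
  proof -
    have "(\<Sum>s\<in>S c. \<Sum>u\<in>?T c. mu x c s u) = (\<Sum>u\<in>?T c. x$(c,u) * (\<Sum>s\<in>S c. ?e c u s))"
      unfolding mu_def by (subst sum.swap) (simp add: sum_distrib_left mult.commute)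
    also have "\<dots> = (\<Sum>u\<in>?T c. x$(c,u))" using ep by simp
    finally show ?thesis using that unfolding D_def by simp
  qed
  have munn: "0 \<le> mu x c s u" if "x \<in> D" "s \<in> S c" "u \<in> ?T c" for x c s u
    using ep[OF that(3)] that unfolding mu_def D_def by (auto intro!: mult_nonneg_nonneg)
  have inXSA: "muSA S A (mu x) \<in> XSA S A m" if xD: "x \<in> D" for x
    unfolding XSA_def
  proof (intro CollectI conjI allI impI)
    fix c s a
    show "0 \<le> muSA S A (mu x) $ (c, s, a)"
      unfolding muSA_def using munn[OF xD] by (auto intro!: sum_nonneg mult_nonneg_nonneg simp: pol_def)
    show "\<not> (s \<in> S c \<and> a \<in> Aall S A c) \<Longrightarrow> muSA S A (mu x) $ (c, s, a) = 0"
      unfolding muSA_def by auto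
  next
    fix c
    have "(\<Sum>s\<in>S c. \<Sum>a\<in>Aall S A c. muSA S A (mu x) $ (c, s, a)) =
          (\<Sum>s\<in>S c. \<Sum>a\<in>Aall S A c. \<Sum>u\<in>?T c. mu x c s u * pol u a s)"
      unfolding muSA_def by simp
    also have "\<dots> = (\<Sum>s\<in>S c. \<Sum>u\<in>?T c. mu x c s u * (\<Sum>a\<in>Aall S A c. pol u a s))"
      by (intro sum.cong refl) (subst sum.swap, simp add: sum_distrib_left)
    also have "\<dots> = (\<Sum>s\<in>S c. \<Sum>u\<in>?T c. mu x c s u)"
      using polsum by (intro sum.cong refl) simp
    finally show "(\<Sum>s\<in>S c. \<Sum>a\<in>Aall S A c. muSA S A (mu x) $ (c, s, a)) = m c"
      using mass[OF xD] by simp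
  qed
  have cmu: "continuous_on D (\<lambda>x. muSA S A (mu x))"
    unfolding muSA_def mu_def
  proof (rule continuous_on_vec_lambda)
    fix i :: "'c \<times> 's \<times> 'a"
    obtain c s a where i: "i = (c, s, a)" by (cases i) auto
    show "continuous_on D (\<lambda>x. case i of (c, s, a) \<Rightarrow>
       if s \<in> S c \<and> a \<in> Aall S A c then \<Sum>u\<in>UD S A c. (case x of x \<Rightarrow> \<lambda>c s u. ?e c u s * x $ (c, u)) c s u * pol u a s else 0)"
      unfolding i by (simp, intro cont_if_const continuous_intros) 
  qed
  have contF: "\<forall>c. \<forall>u\<in>?T c. continuous_on D (\<lambda>x. Fval S A phi lam r c u (mu x))"
  proof (intro allI ballI)
    fix c u
    show "continuous_on D (\<lambda>x. Fval S A phi lam r c u (mu x))"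
      unfolding Fval_def
    proof (intro continuous_on_sum continuous_on_mult continuous_on_const)
      fix s a assume sS: "s \<in> S c" and aA: "a \<in> A c s"
      have aA': "a \<in> Aall S A c" using sS aA unfolding Aall_def by auto
      show "continuous_on D (\<lambda>x. r c s a (muSA S A (mu x)))"
        by (rule continuous_on_compose2[OF r_cont[OF A1 sS aA'] cmu]) (use inXSA in auto)
    qed
  qed
  obtain x where xD: "x \<in> D"
    and nash: "\<forall>c. \<forall>u\<in>?T c. 0 < x$(c,u) \<longrightarrow> (\<forall>v\<in>?T c. Fval S A phi lam r c v (mu x) \<le> Fval S A phi lam r c u (mu x))"
    using nash_exists[of ?T m "\<lambda>c u x. Fval S A phi lam r c u (mu x)", OF Tne mass_pos contF[unfolded D_def]]
    unfolding D_def by blast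
  have colsum: "(\<Sum>s\<in>S c. mu x c s u) = x$(c,u)" if "u \<in> ?T c" for c u
    using ep[OF that] unfolding mu_def by (simp add: sum_distrib_right[symmetric])
  show ?thesis
  proof (intro exI[of _ "mu x"])
    show "MSNE S A phi lam m r (mu x)"
      unfolding MSNE_def inX_def
    proof (intro conjI allI ballI impI)
      fix c s u assume "s \<in> S c" "u \<in> UD S A c"
      then show "0 \<le> mu x c s u" using munn[OF xD] by blast
    next
      fix c show "(\<Sum>s\<in>S c. \<Sum>u\<in>UD S A c. mu x c s u) = m c" by (rule mass[OF xD])
    next
      fix c u v assume uT: "u \<in> UD S A c" and pos: "0 < (\<Sum>s\<in>S c. mu x c s u)" and vT: "v \<in> UD S A c"
      then show "Fval S A phi lam r c v (mu x) \<le> Fval S A phi lam r c u (mu x)"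
        using nash colsum[OF uT] by auto
    next
      fix c u s assume uT: "u \<in> UD S A c" and "s \<in> S c"
      show "mu x c s u = ?e c u s * (\<Sum>s'\<in>S c. mu x c s' u)"
        unfolding colsum[OF uT] by (simp add: mu_def)
    qed
  qed
qed

end
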